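(* Suppose a unitary $C$ is written in the form $$C=H_{\mathbf a}P_{\mathbf d}Z_{\mathbf D}\,\mathbf H\,e^{\mathrm{i}\phi}X_{\mathbf u}Z_{\mathbf v}P_{\mathbf b}Z_{\mathbf B}X_{\mathbf A}$$ with $\mathbf a,\mathbf d,\mathbf u,\mathbf v,\mathbf b\in\mathbb F_2^n$, $\mathbf D,\mathbf B\in\mathcal B_n$, $\mathbf A\in GL_n(\mathbb F_2)$ and $\phi\in\{k\pi/4:k\in\mathbb Z\}$. Then for every $i\in\{0,\dots,n-1\}$, the product $P_iC$ can also be written in this form (with possibly different data of the same types).
   Context: Qubits are labelled $0,\dots,n-1$; computational basis $\{|x\rangle:x\in\mathbb F_2^n\}$; $\mathrm{i}=\sqrt{-1}$. One-qubit gates $\mathtt H=\frac1{\sqrt2}\begin{pmatrix}1&1\\1&-1\end{pmatrix}$, $\mathtt P=\mathrm{diag}(1,\mathrm{i})$, $\mathtt Z=\mathrm{diag}(1,-1)$, $\mathtt X=\begin{pmatrix}0&1\\1&0\end{pmatrix}$; $U_i$ denotes the gate $\mathtt U$ acting on qubit $i$, and $U_{\mathbf a}=\prod_iU_i^{a_i}$ for $\mathbf a\in\mathbb F_2^n$. $\mathbf H=\prod_{i=0}^{n-1}H_i$. For $\mathbf A\in GL_n(\mathbb F_2)$, $X_{\mathbf A}|x\rangle=|\mathbf Ax\rangle$. $\mathcal B_n$ is the set of symmetric $n\times n$ matrices over $\mathbb F_2$ with zero diagonal, and for $\mathbf B\in\mathcal B_n$, $Z_{\mathbf B}|x\rangle=(-1)^{\sum_{i<j}b_{ij}x_ix_j}|x\rangle$.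 *)

theory Defs
  imports Complex_Main "HOL-Library.Z2"
begin

text \<open>Vectors in F_2^n are functions nat => bit (entries at index >= n are zero);
  an operator on the n-qubit space is given by its matrix entries
  M x y = <x|M|y>, indexed by computational basis vectors x, y in F_2^n.\<close>

type_synonym bvec = "nat \<Rightarrow> bit"
type_synonym qop = "bvec \<Rightarrow> bvec \<Rightarrow> complex"

definition bvecs :: "nat \<Rightarrow> bvec set" where
  "bvecs n = {x. \<forall>i\<ge>n. x i = 0}"

definition mmult :: "nat \<Rightarrow> qop \<Rightarrow> qop \<Rightarrow> qop" where
  "mmult n M N = (\<lambda>x y. \<Sum>z\<in>bvecs n. M x z * N z y)"

definition mid :: qop where
  "mid = (\<lambda>x y. if x = y then 1 else 0)"

definition smult_op :: "complex \<Rightarrow> qop \<Rightarrow> qop" where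
  "smult_op c M = (\<lambda>x y. c * M x y)"

definition op_eq :: "nat \<Rightarrow> qop \<Rightarrow> qop \<Rightarrow> bool" where
  "op_eq n M N \<longleftrightarrow> (\<forall>x\<in>bvecs n. \<forall>y\<in>bvecs n. M x y = N x y)"

definition Hg :: "bit \<Rightarrow> bit \<Rightarrow> complex" where
  "Hg a b = (if a = 1 \<and> b = 1 then -1 else 1) / complex_of_real (sqrt 2)"
definition Pg :: "bit \<Rightarrow> bit \<Rightarrow> complex" where
  "Pg a b = (if a \<noteq> b then 0 else if a = 1 then \<i> else 1)"
definition Zg :: "bit \<Rightarrow> bit \<Rightarrow> complex" where
  "Zg a b = (if a \<noteq> b then 0 else if a = 1 then -1 else 1)"
definition Xg :: "bit \<Rightarrow> bit \<Rightarrow> complex" where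
  "Xg a b = (if a \<noteq> b then 1 else 0)"

definition gate1 :: "nat \<Rightarrow> (bit \<Rightarrow> bit \<Rightarrow> complex) \<Rightarrow> qop" where
  "gate1 i U = (\<lambda>x y. if (\<forall>j. j \<noteq> i \<longrightarrow> x j = y j) then U (x i) (y i) else 0)"

definition gates :: "nat \<Rightarrow> (bit \<Rightarrow> bit \<Rightarrow> complex) \<Rightarrow> bvec \<Rightarrow> qop" where
  "gates n U a = foldr (\<lambda>i M. mmult n (if a i = 1 then gate1 i U else mid) M) [0..<n] mid"

definition allH :: "nat \<Rightarrow> qop" where
  "allH n = foldr (\<lambda>i M. mmult n (gate1 i Hg) M) [0..<n] mid"

type_synonym bmat = "nat \<Rightarrow> nat \<Rightarrow> bit"

definition matvec :: "nat \<Rightarrow> bmat \<Rightarrow> bvec \<Rightarrow> bvec" where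
  "matvec n A x = (\<lambda>i. if i < n then (\<Sum>j<n. A i j * x j) else 0)"

definition GL2 :: "nat \<Rightarrow> bmat \<Rightarrow> bool" where
  "GL2 n A \<longleftrightarrow> (\<exists>A'.
     (\<forall>i<n. \<forall>k<n. (\<Sum>j<n. A i j * A' j k) = (if i = k then 1 else 0)) \<and>
     (\<forall>i<n. \<forall>k<n. (\<Sum>j<n. A' i j * A j k) = (if i = k then 1 else 0)))"

definition symB :: "nat \<Rightarrow> bmat \<Rightarrow> bool" where
  "symB n B \<longleftrightarrow> (\<forall>i<n. \<forall>j<n. B i j = B j i) \<and> (\<forall>i<n. B i i = 0)"

definition XA :: "nat \<Rightarrow> bmat \<Rightarrow> qop" where
  "XA n A = (\<lambda>x y. if x = matvec n A y then 1 else 0)"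

definition ZB :: "nat \<Rightarrow> bmat \<Rightarrow> qop" where
  "ZB n B = (\<lambda>x y. if x = y then
      (if (\<Sum>j<n. \<Sum>i<j. B i j * x i * x j) = 1 then -1 else 1) else 0)"

definition normal_form_op ::
  "nat \<Rightarrow> bvec \<Rightarrow> bvec \<Rightarrow> bmat \<Rightarrow> int \<Rightarrow> bvec \<Rightarrow> bvec \<Rightarrow> bvec \<Rightarrow> bmat \<Rightarrow> bmat \<Rightarrow> qop" where
  "normal_form_op n a d D k u v b B A =
     mmult n (gates n Hg a) (mmult n (gates n Pg d) (mmult n (ZB n D) (mmult n (allH n)
       (mmult n (smult_op (cis (of_int k * pi / 4)) (gates n Xg u))
         (mmult n (gates n Zg v) (mmult n (gates n Pg b) (mmult n (ZB n B) (XA n A))))))))"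

definition in_normal_form :: "nat \<Rightarrow> qop \<Rightarrow> bool" where
  "in_normal_form n C \<longleftrightarrow> (\<exists>a d D k u v b B A.
     a \<in> bvecs n \<and> d \<in> bvecs n \<and> u \<in> bvecs n \<and> v \<in> bvecs n \<and> b \<in> bvecs n \<and>
     symB n D \<and> symB n B \<and> GL2 n A \<and>
     op_eq n C (normal_form_op n a d D k u v b B A))"

end

theory Submission
  imports Defs
begin


declare add_bit_eq_xor[simp del] mult_bit_eq_and[simp del]

definition sg :: "bit \<Rightarrow> complex" where "sg c = (if c = 1 then -1 else 1)"
definition ip :: "bit \<Rightarrow> complex" where "ip c = (if c = 1 then \<i> else 1)"
definition dl :: "bit \<Rightarrow> bit \<Rightarrow> complex" where "dl a b = (if a = b then 1 else 0)"
definition vadd :: "bvec \<Rightarrow> bvec \<Rightarrow> bvec" where "vadd x y = (\<lambda>j. x j + y j)"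
definition qf :: "nat \<Rightarrow> bmat \<Rightarrow> bvec \<Rightarrow> bit" where
  "qf n B w = (\<Sum>j<n. \<Sum>i<j. B i j * w i * w j)"

lemma bit_idem[simp]: "(c::bit) * c = c" by (cases c) simp_all
lemma bit_dbl[simp]: "(c::bit) + c = 0" by simp

lemma sg_add: "sg (a + b) = sg a * sg b"
  by (cases a; cases b) (simp_all add: sg_def)
lemma sg_sq: "sg a * sg a = 1" by (simp add: sg_def)
lemma sg_0[simp]: "sg 0 = 1" and sg_1[simp]: "sg 1 = -1" by (simp_all add: sg_def)
lemma ip_0[simp]: "ip 0 = 1" and ip_1[simp]: "ip 1 = \<i>" by (simp_all add: ip_def)
lemma ip_add: "ip (a + b) = ip a * ip b * sg (a * b)"
  by (cases a; cases b) (simp_all add: ip_def sg_def)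
lemma sg_sum: "finite A \<Longrightarrow> sg (\<Sum>j\<in>A. f j) = (\<Prod>j\<in>A. sg (f j))"
  by (induction A rule: finite_induct) (simp_all add: sg_add)
lemma Hg_shift: "Hg z (t + e) = Hg z t * sg (z * e)"
  by (cases z; cases t; cases e) (simp_all add: Hg_def sg_def)

lemma ip_sum: "ip (\<Sum>k<(m::nat). x k) = (\<Prod>k<m. ip (x k)) * sg (\<Sum>k<m. \<Sum>j<k. x j * x k)"
proof (induction m)
  case 0 then show ?case by simp
next
  case (Suc m)
  have "sg ((\<Sum>j<m. x j) * x m) = sg (\<Sum>j<m. x j * x m)" by (simp add: sum_distrib_right)
  then show ?case using Suc by (simp add: ip_add sg_add algebra_simps)
qed



lemma bit_UNIV: "(UNIV::bit set) = {0,1}" by (auto intro: bit.exhaust)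

lemma bvecs_eq: "x \<in> bvecs n \<Longrightarrow> y \<in> bvecs n \<Longrightarrow> (x = y) = (\<forall>j<n. x j = y j)"
proof -
  assume x: "x \<in> bvecs n" and y: "y \<in> bvecs n"
  show ?thesis
  proof
    assume h: "\<forall>j<n. x j = y j"
    show "x = y"
    proof
      fix j show "x j = y j"
      proof (cases "j < n")
        case True then show ?thesis using h by simp
      next
        case False then show ?thesis using x y unfolding bvecs_def by simp
      qed
    qed
  qed simp
qed

lemma finite_bvecs[simp]: "finite (bvecs n)"
proof -
  have inj: "inj_on (\<lambda>x. map x [0..<n]) (bvecs n)"
  proof (rule inj_onI)
    fix x y assume xy: "x \<in> bvecs n" "y \<in> bvecs n" and m: "map x [0..<n] = map y [0..<n]"
    from m have "\<forall>j<n. x j = y j" by (simp add: map_eq_conv)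
    then show "x = y" using bvecs_eq[OF xy] by simp
  qed
  have "(\<lambda>x. map x [0..<n]) ` bvecs n \<subseteq> {xs. set xs \<subseteq> {0,1} \<and> length xs = n}"
    using bit_UNIV by auto
  moreover have "finite {xs. set xs \<subseteq> ({0,1}::bit set) \<and> length xs = n}"
    by (rule finite_lists_length_eq) simp
  ultimately show ?thesis using inj finite_imageD finite_subset by blast
qed

lemma bvecs_upd[simp]: "j < n \<Longrightarrow> x \<in> bvecs n \<Longrightarrow> x(j:=c) \<in> bvecs n"
  unfolding bvecs_def by auto

lemma vadd_bvecs[simp]: "x \<in> bvecs n \<Longrightarrow> y \<in> bvecs n \<Longrightarrow> vadd x y \<in> bvecs n"
  unfolding bvecs_def vadd_def by auto

lemma matvec_bvecs[simp]: "matvec n A y \<in> bvecs n"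
  unfolding bvecs_def matvec_def by auto

lemma prod_remove_at: "j < (n::nat) \<Longrightarrow> (\<Prod>m<n. F m) = F j * (\<Prod>m\<in>{..<n}-{j}. F m)"
  by (rule prod.remove) auto

lemma sum_remove_at: "j < (n::nat) \<Longrightarrow> (\<Sum>m<n. F m) = F j + (\<Sum>m\<in>{..<n}-{j}. F m)"
  by (rule sum.remove) auto

lemma prod_upd_split: "j < (n::nat) \<Longrightarrow>
  (\<Prod>m<n. F m ((x(j:=c)) m)) = F j c * (\<Prod>m\<in>{..<n}-{j}. F m (x m))"
  by (subst prod_remove_at[of j]) (auto intro!: prod.cong)

lemma prod_split_cong: "j < (n::nat) \<Longrightarrow> (\<And>m. m < n \<Longrightarrow> m \<noteq> j \<Longrightarrow> F m = G m) \<Longrightarrow>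
  (\<Prod>m<n. F m) = F j * (\<Prod>m\<in>{..<n}-{j}. G m)"
  by (subst prod_remove_at[of j]) (auto intro!: prod.cong)

lemma prod_dl: "x \<in> bvecs n \<Longrightarrow> y \<in> bvecs n \<Longrightarrow> (\<Prod>m<n. dl (x m) (y m)) = (if x = y then 1 else 0)"
proof (cases "x = y")
  case True then show ?thesis by (simp add: dl_def)
next
  case False
  assume "x \<in> bvecs n" "y \<in> bvecs n"
  with False obtain j where "j < n" "x j \<noteq> y j" using bvecs_eq by blast
  then show ?thesis using False by (auto simp: dl_def intro!: prod_zero)
qed

lemma sum_upd:
  assumes "x \<in> bvecs n" "j < n"
  shows "(\<Sum>z\<in>bvecs n. if (\<forall>m. m \<noteq> j \<longrightarrow> x m = z m) then g z else 0) = g (x(j:=0)) + g (x(j:=1))"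
proof -
  have S: "{z \<in> bvecs n. \<forall>m. m \<noteq> j \<longrightarrow> x m = z m} = {x(j:=0), x(j:=1)}"
  proof (intro equalityI subsetI)
    fix z assume "z \<in> {z \<in> bvecs n. \<forall>m. m \<noteq> j \<longrightarrow> x m = z m}"
    then have "\<forall>m. m \<noteq> j \<longrightarrow> x m = z m" by auto
    then have "z = x(j := z j)" by auto
    then show "z \<in> {x(j:=0), x(j:=1)}" by (cases "z j") auto
  next
    fix z assume "z \<in> {x(j:=0), x(j:=1)}"
    then show "z \<in> {z \<in> bvecs n. \<forall>m. m \<noteq> j \<longrightarrow> x m = z m}" using assms by auto
  qed
  have d: "x(j:=0) \<noteq> x(j:=1)" by (metis fun_upd_same zero_neq_one)
  have "(\<Sum>z\<in>bvecs n. if (\<forall>m. m \<noteq> j \<longrightarrow> x m = z m) then g z else 0)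
      = (\<Sum>z\<in>{z \<in> bvecs n. \<forall>m. m \<noteq> j \<longrightarrow> x m = z m}. g z)"
    by (simp add: sum.inter_filter)
  also have "\<dots> = g (x(j:=0)) + g (x(j:=1))" using S d by simp
  finally show ?thesis .
qed

lemma mmult_mid_left: "x \<in> bvecs n \<Longrightarrow> mmult n mid M x y = M x y"
proof -
  assume x: "x \<in> bvecs n"
  have "mmult n mid M x y = (\<Sum>z\<in>bvecs n. if x = z then M z y else 0)"
    unfolding mmult_def mid_def by (rule sum.cong) auto
  then show ?thesis using x by simp
qed

lemma fold_gates:
  assumes "distinct l" "set l \<subseteq> {..<n}" "x \<in> bvecs n" "y \<in> bvecs n"
  shows "foldr (\<lambda>j M. mmult n (if sel j then gate1 j U else mid) M) l mid x y
       = (\<Prod>m<n. if m \<in> set l \<and> sel m then U (x m) (y m) else dl (x m) (y m))"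
  using assms
proof (induction l arbitrary: x)
  case Nil
  then show ?case by (simp add: prod_dl mid_def)
next
  case (Cons j l)
  let ?M = "foldr (\<lambda>j M. mmult n (if sel j then gate1 j U else mid) M) l mid"
  have jn: "j < n" and jl: "j \<notin> set l" using Cons.prems by auto
  show ?case
  proof (cases "sel j")
    case False
    then have "foldr (\<lambda>j M. mmult n (if sel j then gate1 j U else mid) M) (j # l) mid x y = ?M x y"
      using Cons.prems by (simp add: mmult_mid_left)
    also have "\<dots> = (\<Prod>m<n. if m \<in> set l \<and> sel m then U (x m) (y m) else dl (x m) (y m))"
      using Cons by simp
    also have "\<dots> = (\<Prod>m<n. if m \<in> set (j#l) \<and> sel m then U (x m) (y m) else dl (x m) (y m))"
      using False by (intro prod.cong) auto
    finally show ?thesis .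
  next
    case True
    let ?R = "(\<Prod>m\<in>{..<n}-{j}. if m \<in> set l \<and> sel m then U (x m) (y m) else dl (x m) (y m))"
    have IH: "?M (x(j:=c)) y = dl c (y j) * ?R" for c
    proof -
      have "?M (x(j:=c)) y = (\<Prod>m<n. if m \<in> set l \<and> sel m then U ((x(j:=c)) m) (y m) else dl ((x(j:=c)) m) (y m))"
        using Cons jn by simp
      also have "\<dots> = dl c (y j) * ?R"
        using jn jl prod_upd_split[OF jn, of "\<lambda>m v. if m \<in> set l \<and> sel m then U v (y m) else dl v (y m)" x c]
        by simp
      finally show ?thesis .
    qed
    have "foldr (\<lambda>j M. mmult n (if sel j then gate1 j U else mid) M) (j # l) mid x y
       = (\<Sum>z\<in>bvecs n. gate1 j U x z * ?M z y)"
      using True by (simp add: mmult_def)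
    also have "\<dots> = (\<Sum>z\<in>bvecs n. if (\<forall>m. m \<noteq> j \<longrightarrow> x m = z m) then U (x j) (z j) * ?M z y else 0)"
      unfolding gate1_def by (intro sum.cong) auto
    also have "\<dots> = U (x j) 0 * ?M (x(j:=0)) y + U (x j) 1 * ?M (x(j:=1)) y"
      using sum_upd[OF Cons.prems(3) jn, of "\<lambda>z. U (x j) (z j) * ?M z y"] by simp
    also have "\<dots> = U (x j) (y j) * ?R"
      unfolding IH by (cases "y j") (simp_all add: dl_def)
    also have "\<dots> = (\<Prod>m<n. if m \<in> set (j#l) \<and> sel m then U (x m) (y m) else dl (x m) (y m))"
      using jn jl True by (subst prod_split_cong[OF jn]) auto
    finally show ?thesis .
  qed
qed

lemma gates_entry:
  "x \<in> bvecs n \<Longrightarrow> y \<in> bvecs n \<Longrightarrow>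
   gates n U a x y = (\<Prod>m<n. if a m = 1 then U (x m) (y m) else dl (x m) (y m))"
  unfolding gates_def by (subst fold_gates) auto

lemma allH_entry:
  "x \<in> bvecs n \<Longrightarrow> y \<in> bvecs n \<Longrightarrow> allH n x y = (\<Prod>m<n. Hg (x m) (y m))"
proof -
  assume "x \<in> bvecs n" "y \<in> bvecs n"
  moreover have "set [0..<n] \<subseteq> {..<n}" by auto
  ultimately show ?thesis
    using fold_gates[of "[0..<n]" n x y "\<lambda>_. True" Hg] unfolding allH_def by simp
qed



definition rho :: "nat \<Rightarrow> bvec \<Rightarrow> bvec \<Rightarrow> bmat \<Rightarrow> bvec \<Rightarrow> complex" where
  "rho n b v B w = (\<Prod>j<n. ip (b j * w j) * sg (v j * w j)) * sg (qf n B w)"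
definition HAf :: "nat \<Rightarrow> bvec \<Rightarrow> bvec \<Rightarrow> bvec \<Rightarrow> complex" where
  "HAf n a x z = (\<Prod>j<n. if a j = 1 then Hg (x j) (z j) else dl (x j) (z j))"
definition Hallf :: "nat \<Rightarrow> bvec \<Rightarrow> bvec \<Rightarrow> complex" where
  "Hallf n z t = (\<Prod>j<n. Hg (z j) (t j))"
definition ipv :: "nat \<Rightarrow> bvec \<Rightarrow> bvec \<Rightarrow> complex" where
  "ipv n d z = (\<Prod>j<n. ip (d j * z j))"
definition sgv :: "nat \<Rightarrow> bvec \<Rightarrow> bvec \<Rightarrow> complex" where
  "sgv n d z = (\<Prod>j<n. sg (d j * z j))"

definition NFf :: "nat \<Rightarrow> bvec \<Rightarrow> bvec \<Rightarrow> bmat \<Rightarrow> int \<Rightarrow> bvec \<Rightarrow> bvec \<Rightarrow> bvec \<Rightarrow> bmat \<Rightarrow> bmat \<Rightarrow> qop" where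
  "NFf n a d D k u v b B A x y = cis (of_int k * pi / 4) * rho n b v B (matvec n A y) *
     (\<Sum>z\<in>bvecs n. HAf n a x z * ipv n d z * sg (qf n D z) * Hallf n z (vadd (matvec n A y) u))"

lemma diff_witness: "x \<in> bvecs n \<Longrightarrow> y \<in> bvecs n \<Longrightarrow> x \<noteq> y \<Longrightarrow> \<exists>j<n. x j \<noteq> y j"
  using bvecs_eq by blast

lemma gates_P: "x \<in> bvecs n \<Longrightarrow> y \<in> bvecs n \<Longrightarrow> gates n Pg d x y = (if x = y then ipv n d x else 0)"
proof -
  assume x: "x \<in> bvecs n" and y: "y \<in> bvecs n"
  show ?thesis
  proof (cases "x = y")
    case True
    have "gates n Pg d x y = (\<Prod>m<n. ip (d m * x m))"
      unfolding gates_entry[OF x y] using True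
      by (intro prod.cong refl) (auto simp: Pg_def dl_def ip_def)
    then show ?thesis using True by (simp add: ipv_def)
  next
    case False
    then obtain j where j: "j < n" "x j \<noteq> y j" using diff_witness x y by blast
    have "gates n Pg d x y = 0"
      unfolding gates_entry[OF x y]
      by (rule prod_zero) (use j in \<open>auto intro!: bexI[of _ j] simp: Pg_def dl_def\<close>)
    then show ?thesis using False by simp
  qed
qed

lemma gates_Z: "x \<in> bvecs n \<Longrightarrow> y \<in> bvecs n \<Longrightarrow> gates n Zg d x y = (if x = y then sgv n d x else 0)"
proof -
  assume x: "x \<in> bvecs n" and y: "y \<in> bvecs n"
  show ?thesis
  proof (cases "x = y")
    case True
    have "gates n Zg d x y = (\<Prod>m<n. sg (d m * x m))"
      unfolding gates_entry[OF x y] using True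
      by (intro prod.cong refl) (auto simp: Zg_def dl_def sg_def)
    then show ?thesis using True by (simp add: sgv_def)
  next
    case False
    then obtain j where j: "j < n" "x j \<noteq> y j" using diff_witness x y by blast
    have "gates n Zg d x y = 0"
      unfolding gates_entry[OF x y]
      by (rule prod_zero) (use j in \<open>auto intro!: bexI[of _ j] simp: Zg_def dl_def\<close>)
    then show ?thesis using False by simp
  qed
qed

lemma gates_X: "x \<in> bvecs n \<Longrightarrow> y \<in> bvecs n \<Longrightarrow> u \<in> bvecs n \<Longrightarrow>
   gates n Xg u x y = (if x = vadd y u then 1 else 0)"
proof -
  assume x: "x \<in> bvecs n" and y: "y \<in> bvecs n" and u: "u \<in> bvecs n"
  have "gates n Xg u x y = (\<Prod>m<n. dl (x m) (vadd y u m))"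
    unfolding gates_entry[OF x y] vadd_def
    apply (intro prod.cong refl)
    subgoal for m by (cases "u m"; cases "x m"; cases "y m") (simp_all add: Xg_def dl_def)
    done
  also have "\<dots> = (if x = vadd y u then 1 else 0)" using prod_dl x y u by simp
  finally show ?thesis .
qed

lemma vadd_inv: "vadd (vadd z u) u = z" by (simp add: vadd_def)

lemma vadd_eq: "(x = vadd z u) = (z = vadd x u)"
  by (auto simp: vadd_def fun_eq_iff)

lemma mmult_diag_left:
  assumes "\<And>x z. x \<in> bvecs n \<Longrightarrow> z \<in> bvecs n \<Longrightarrow> M x z = (if x = z then f x else 0)" "x \<in> bvecs n"
  shows "mmult n M N x y = f x * N x y"
proof -
  have "mmult n M N x y = (\<Sum>z\<in>bvecs n. if x = z then f x * N z y else 0)"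
    unfolding mmult_def using assms by (intro sum.cong) auto
  then show ?thesis using assms by simp
qed

lemma gate1_P: "gate1 i Pg x z = (if x = z then ip (x i) else 0)"
proof (cases "x = z")
  case True then show ?thesis by (simp add: gate1_def Pg_def ip_def)
next
  case neq: False
  have "gate1 i Pg x z = 0"
  proof (cases "\<forall>m. m \<noteq> i \<longrightarrow> x m = z m")
    case h: True
    have "x i \<noteq> z i"
    proof
      assume "x i = z i" then have "x = z" using h by (auto simp: fun_eq_iff)
      then show False using neq by simp
    qed
    then have "Pg (x i) (z i) = 0" by (simp add: Pg_def)
    then show ?thesis using h by (simp add: gate1_def)
  next
    case False then show ?thesis unfolding gate1_def by (rule if_not_P)
  qed
  then show ?thesis using neq by simp
qed

lemma NF_entry:
  assumes x: "x \<in> bvecs n" and y: "y \<in> bvecs n" and u: "u \<in> bvecs n"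
  shows "normal_form_op n a d D k u v b B A x y = NFf n a d D k u v b B A x y"
proof -
  define w where "w = matvec n A y"
  define om where "om = cis (of_int k * pi / 4)"
  have w: "w \<in> bvecs n" unfolding w_def by simp
  define T1 where "T1 = mmult n (ZB n B) (XA n A)"
  define T2 where "T2 = mmult n (gates n Pg b) T1"
  define T3 where "T3 = mmult n (gates n Zg v) T2"
  define T4 where "T4 = mmult n (smult_op om (gates n Xg u)) T3"
  define T5 where "T5 = mmult n (allH n) T4"
  have T3e: "T3 z y = (if z = w then rho n b v B w else 0)" if z: "z \<in> bvecs n" for z
  proof -
    have "T1 z y = sg (qf n B z) * XA n A z y"
      unfolding T1_def by (rule mmult_diag_left[OF _ z]) (simp add: ZB_def sg_def qf_def)
    moreover have "T2 z y = ipv n b z * T1 z y"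
      unfolding T2_def by (rule mmult_diag_left[OF _ z]) (simp add: gates_P)
    moreover have "T3 z y = sgv n v z * T2 z y"
      unfolding T3_def by (rule mmult_diag_left[OF _ z]) (simp add: gates_Z)
    ultimately show ?thesis
      by (simp add: XA_def w_def rho_def ipv_def sgv_def prod.distrib)
  qed
  have T4e: "T4 z y = (if z = vadd w u then om * rho n b v B w else 0)" if z: "z \<in> bvecs n" for z
  proof -
    have "T4 z y = (\<Sum>z2\<in>bvecs n. if z2 = vadd z u then om * T3 z2 y else 0)"
      unfolding T4_def mmult_def smult_op_def
      by (intro sum.cong refl) (simp add: gates_X[OF z _ u] vadd_eq)
    also have "\<dots> = om * T3 (vadd z u) y" using z u by simp
    also have "\<dots> = (if z = vadd w u then om * rho n b v B w else 0)"
      using T3e[of "vadd z u"] z u by (auto simp: vadd_eq[symmetric])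
    finally show ?thesis .
  qed
  have T5e: "T5 z y = om * rho n b v B w * Hallf n z (vadd w u)" if z: "z \<in> bvecs n" for z
  proof -
    have "T5 z y = (\<Sum>z2\<in>bvecs n. if z2 = vadd w u then Hallf n z z2 * (om * rho n b v B w) else 0)"
      unfolding T5_def mmult_def
      by (intro sum.cong refl) (simp add: allH_entry[OF z] T4e Hallf_def)
    also have "\<dots> = om * rho n b v B w * Hallf n z (vadd w u)" using w u by simp
    finally show ?thesis .
  qed
  have "normal_form_op n a d D k u v b B A x y =
     mmult n (gates n Hg a) (mmult n (gates n Pg d) (mmult n (ZB n D) T5)) x y"
    unfolding normal_form_op_def T5_def T4_def T3_def T2_def T1_def om_def ..
  also have "\<dots> = (\<Sum>z\<in>bvecs n. HAf n a x z * (ipv n d z * (sg (qf n D z) * T5 z y)))"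
  proof -
    have "mmult n (gates n Pg d) (mmult n (ZB n D) T5) z y = ipv n d z * (sg (qf n D z) * T5 z y)"
      if z: "z \<in> bvecs n" for z
    proof -
      have "mmult n (ZB n D) T5 z y = sg (qf n D z) * T5 z y"
        by (rule mmult_diag_left[OF _ z]) (simp add: ZB_def sg_def qf_def)
      moreover have "mmult n (gates n Pg d) (mmult n (ZB n D) T5) z y = ipv n d z * mmult n (ZB n D) T5 z y"
        by (rule mmult_diag_left[OF _ z]) (simp add: gates_P)
      ultimately show ?thesis by simp
    qed
    then show ?thesis unfolding mmult_def[of n "gates n Hg a"]
      by (intro sum.cong refl) (simp add: gates_entry[OF x] HAf_def)
  qed
  also have "\<dots> = NFf n a d D k u v b B A x y"
    unfolding NFf_def w_def[symmetric] om_def[symmetric] sum_distrib_left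
    by (intro sum.cong refl) (simp add: T5e mult_ac)
  finally show ?thesis .
qed



lemma tri_delta:
  fixes f :: "nat \<Rightarrow> 'a::comm_monoid_add"
  assumes "i < n"
  shows "(\<Sum>j<n. \<Sum>k<j. (if k = i then f j else 0) + (if j = i then f k else 0))
       = (\<Sum>m<n. if m = i then 0 else f m)"
proof -
  have A: "(\<Sum>j<n. \<Sum>k<j. (if k = i then f j else 0)) = (\<Sum>m<n. if i < m then f m else 0)"
    by (intro sum.cong refl) simp
  have B: "(\<Sum>j<n. \<Sum>k<j. (if j = i then f k else 0)) = (\<Sum>m<n. if m < i then f m else 0)"
  proof -
    have "(\<Sum>j<n. \<Sum>k<j. (if j = i then f k else 0)) = (\<Sum>j<n. if j = i then (\<Sum>k<j. f k) else 0)"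
      by (intro sum.cong refl) simp
    also have "\<dots> = (\<Sum>k<i. f k)" using assms by simp
    also have "\<dots> = (\<Sum>m<n. if m < i then f m else 0)"
    proof -
      have "(\<Sum>m<n. if m < i then f m else 0) = (\<Sum>m\<in>{m\<in>{..<n}. m < i}. f m)"
        by (rule sum.inter_filter[symmetric]) simp
      also have "{m\<in>{..<n}. m < i} = {..<i}" using assms by auto
      finally show ?thesis by simp
    qed
    finally show ?thesis .
  qed
  have "(\<Sum>j<n. \<Sum>k<j. (if k = i then f j else 0) + (if j = i then f k else 0))
      = (\<Sum>m<n. if i < m then f m else 0) + (\<Sum>m<n. if m < i then f m else 0)"
    by (simp add: sum.distrib A B)
  also have "\<dots> = (\<Sum>m<n. if m = i then 0 else f m)"
    by (simp add: sum.distrib[symmetric]) (intro sum.cong refl, auto)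
  finally show ?thesis .
qed

lemma full_sum:
  fixes g :: "nat \<Rightarrow> nat \<Rightarrow> 'a::comm_monoid_add"
  shows "(\<Sum>j<n. \<Sum>k<j. g k j + g j k) + (\<Sum>j<n. g j j) = (\<Sum>j<n. \<Sum>k<n. g k j)"
proof (induction n)
  case 0 then show ?case by simp
next
  case (Suc n)
  have "(\<Sum>j<Suc n. \<Sum>k<j. g k j + g j k) + (\<Sum>j<Suc n. g j j)
     = ((\<Sum>j<n. \<Sum>k<j. g k j + g j k) + (\<Sum>j<n. g j j)) + ((\<Sum>k<n. g k n) + (\<Sum>k<n. g n k) + g n n)"
    by (simp add: sum.distrib add_ac)
  also have "\<dots> = (\<Sum>j<n. \<Sum>k<n. g k j) + ((\<Sum>k<n. g k n) + (\<Sum>k<n. g n k) + g n n)"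
    using Suc by simp
  also have "\<dots> = (\<Sum>j<Suc n. \<Sum>k<Suc n. g k j)"
    by (simp add: sum.distrib add_ac)
  finally show ?case .
qed

lemma qf_upd:
  assumes B: "symB n D" and i: "i < n" and z: "z i = 0"
  shows "qf n D (z(i:=c)) = qf n D z + c * (\<Sum>m<n. D i m * z m)"
proof -
  have pt: "D k j * (z(i:=c)) k * (z(i:=c)) j = D k j * z k * z j +
      c * ((if k = i then D i j * z j else 0) + (if j = i then D i k * z k else 0))"
    if "k < j" "j < n" for k j
  proof -
    have kn: "k < n" using that by simp
    show ?thesis
    proof (cases "k = i")
      case True then show ?thesis using that z by (simp add: algebra_simps)
    next
      case False
      show ?thesis
      proof (cases "j = i")
        case True
        then have "D k j = D i k" using B kn i unfolding symB_def by auto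
        then show ?thesis using True False z by (simp add: algebra_simps)
      qed (use False in simp)
    qed
  qed
  have "qf n D (z(i:=c)) = (\<Sum>j<n. \<Sum>k<j. D k j * z k * z j +
      c * ((if k = i then D i j * z j else 0) + (if j = i then D i k * z k else 0)))"
    unfolding qf_def apply (intro sum.cong refl) apply (rule pt) by auto
  also have "\<dots> = qf n D z + (\<Sum>j<n. \<Sum>k<j. c * ((if k = i then D i j * z j else 0) + (if j = i then D i k * z k else 0)))"
    by (simp only: qf_def sum.distrib)
  also have "\<dots> = qf n D z + c * (\<Sum>j<n. \<Sum>k<j. (if k = i then D i j * z j else 0) + (if j = i then D i k * z k else 0))"
    by (simp only: sum_distrib_left)
  also have "\<dots> = qf n D z + c * (\<Sum>m<n. if m = i then 0 else D i m * z m)"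
    using tri_delta[OF i, of "\<lambda>m. D i m * z m"] by simp
  also have "(\<Sum>m<n. if m = i then 0 else D i m * z m) = (\<Sum>m<n. D i m * z m)"
    using z by (intro sum.cong refl) simp
  finally show ?thesis .
qed



definition inQ :: "nat \<Rightarrow> (bvec \<Rightarrow> complex) \<Rightarrow> bool" where
  "inQ n f \<longleftrightarrow> (\<exists>b v B. b \<in> bvecs n \<and> v \<in> bvecs n \<and> symB n B \<and> (\<forall>w\<in>bvecs n. f w = rho n b v B w))"

lemma inQ_cong: "inQ n f \<Longrightarrow> (\<And>w. w \<in> bvecs n \<Longrightarrow> f w = g w) \<Longrightarrow> inQ n g"
  unfolding inQ_def by metis

lemma inQ_rho: "b \<in> bvecs n \<Longrightarrow> v \<in> bvecs n \<Longrightarrow> symB n B \<Longrightarrow> inQ n (rho n b v B)"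
  unfolding inQ_def by blast

lemma prod_upd_factor:
  assumes "i < (n::nat)" "\<And>j. j \<noteq> i \<Longrightarrow> F' j = F j" "F' i = F i * e"
  shows "(\<Prod>j<n. F' j) = (\<Prod>j<n. F j) * e"
proof -
  have "(\<Prod>j<n. F' j) = F' i * (\<Prod>j\<in>{..<n}-{i}. F' j)" by (rule prod_remove_at[OF assms(1)])
  also have "(\<Prod>j\<in>{..<n}-{i}. F' j) = (\<Prod>j\<in>{..<n}-{i}. F j)" using assms(2) by (intro prod.cong) auto
  also have "(\<Prod>j<n. F j) = F i * (\<Prod>j\<in>{..<n}-{i}. F j)" by (rule prod_remove_at[OF assms(1)])
  ultimately show ?thesis using assms(3) by (simp add: mult_ac)
qed

lemma sg_mul_add: "sg ((v + g) * w) = sg (v * w) * sg (g * w)"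
  by (cases w; cases v; cases g) (simp_all add: sg_def)

lemma ip_sg_upd: "ip ((b + 1) * w) * sg ((v + b) * w) = ip (b * w) * sg (v * w) * ip w"
  by (cases w; cases v; cases b) (simp_all add: sg_def ip_def)

lemma sg_mul_add': "sg (w * (v + g)) = sg (v * w) * sg (g * w)"
  by (cases w; cases v; cases g) (simp_all add: sg_def)

lemma ip_sg_upd': "ip (w * (b + 1)) * sg (w * (v + b)) = ip (b * w) * sg (v * w) * ip w"
  by (cases w; cases v; cases b) (simp_all add: sg_def ip_def)

lemma rho_v_upd: "i < n \<Longrightarrow> rho n b (v(i := v i + g)) B w = rho n b v B w * sg (g * w i)"
  unfolding rho_def
  by (subst prod_upd_factor[of i n _ "\<lambda>j. ip (b j * w j) * sg (v j * w j)" "sg (g * w i)"])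
     (auto simp: sg_mul_add' mult_ac)

lemma inQ_lin: "i < n \<Longrightarrow> inQ n f \<Longrightarrow> inQ n (\<lambda>w. f w * sg (g * w i))"
proof -
  assume i: "i < n" and "inQ n f"
  then obtain b v B where h: "b \<in> bvecs n" "v \<in> bvecs n" "symB n B" "\<forall>w\<in>bvecs n. f w = rho n b v B w"
    unfolding inQ_def by blast
  have "v(i := v i + g) \<in> bvecs n" using h i by simp
  then show ?thesis unfolding inQ_def using h i rho_v_upd by (intro exI[of _ b] exI[of _ "v(i := v i + g)"] exI[of _ B]) auto
qed

lemma rho_ip: "i < n \<Longrightarrow> rho n (b(i := b i + 1)) (v(i := v i + b i)) B w = rho n b v B w * ip (w i)"
  unfolding rho_def
  by (subst prod_upd_factor[of i n _ "\<lambda>j. ip (b j * w j) * sg (v j * w j)" "ip (w i)"])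
     (auto simp: mult_ac ip_sg_upd')

lemma inQ_ip: "i < n \<Longrightarrow> inQ n f \<Longrightarrow> inQ n (\<lambda>w. f w * ip (w i))"
proof -
  assume i: "i < n" and "inQ n f"
  then obtain b v B where h: "b \<in> bvecs n" "v \<in> bvecs n" "symB n B" "\<forall>w\<in>bvecs n. f w = rho n b v B w"
    unfolding inQ_def by blast
  have "b(i := b i + 1) \<in> bvecs n" "v(i := v i + b i) \<in> bvecs n" using h i by simp_all
  then show ?thesis unfolding inQ_def using h i rho_ip
    by (intro exI[of _ "b(i := b i + 1)"] exI[of _ "v(i := v i + b i)"] exI[of _ B]) auto
qed

lemma inQ_ipc: "i < n \<Longrightarrow> inQ n f \<Longrightarrow> inQ n (\<lambda>w. f w * ip (w i * c))"
proof (cases c)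
  case zero
  assume "inQ n f" then show ?thesis using zero by simp
next
  case one
  assume "i < n" "inQ n f" then show ?thesis using one inQ_ip by simp
qed

definition czB :: "nat \<Rightarrow> bvec \<Rightarrow> bmat \<Rightarrow> bmat" where
  "czB i c B = (\<lambda>j k. B j k + (if j = i \<and> k \<noteq> i then c k else if k = i \<and> j \<noteq> i then c j else 0))"

lemma symB_czB: "symB n B \<Longrightarrow> symB n (czB i c B)"
  unfolding symB_def czB_def by auto

lemma qf_czB:
  assumes i: "i < n"
  shows "qf n (czB i c B) w = qf n B w + (\<Sum>m<n. if m = i then 0 else c m * w m * w i)"
proof -
  have pt: "czB i c B k j * w k * w j = B k j * w k * w j +
      ((if k = i then c j * w j * w i else 0) + (if j = i then c k * w k * w i else 0))"
    if "k < j" for k j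
    using that unfolding czB_def by (auto simp: algebra_simps)
  have "qf n (czB i c B) w = (\<Sum>j<n. \<Sum>k<j. B k j * w k * w j +
      ((if k = i then c j * w j * w i else 0) + (if j = i then c k * w k * w i else 0)))"
    unfolding qf_def apply (intro sum.cong refl) apply (rule pt) by auto
  also have "\<dots> = qf n B w + (\<Sum>j<n. \<Sum>k<j. (if k = i then c j * w j * w i else 0) + (if j = i then c k * w k * w i else 0))"
    by (simp only: qf_def sum.distrib)
  also have "\<dots> = qf n B w + (\<Sum>m<n. if m = i then 0 else c m * w m * w i)"
    using tri_delta[OF i, of "\<lambda>m. c m * w m * w i"] by simp
  finally show ?thesis .
qed

lemma rho_cz:
  assumes i: "i < n"
  shows "rho n b (v(i := v i + c i)) (czB i c B) w = rho n b v B w * sg (w i * (\<Sum>m<n. c m * w m))"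
proof -
  have s: "w i * (\<Sum>m<n. c m * w m) = c i * w i + (\<Sum>m<n. if m = i then 0 else c m * w m * w i)"
  proof -
    have "w i * (\<Sum>m<n. c m * w m) = (\<Sum>m<n. c m * w m * w i)" by (simp add: sum_distrib_left mult_ac)
    also have "\<dots> = c i * w i * w i + (\<Sum>m\<in>{..<n}-{i}. c m * w m * w i)" by (rule sum_remove_at[OF i])
    also have "(\<Sum>m\<in>{..<n}-{i}. c m * w m * w i) = (\<Sum>m<n. if m = i then 0 else c m * w m * w i)"
      using sum_remove_at[OF i, of "\<lambda>m. if m = i then 0 else c m * w m * w i"]
      by simp
    finally show ?thesis by (simp add: mult.assoc)
  qed
  show ?thesis
    using rho_v_upd[OF i, of b v "c i" "czB i c B" w]
    unfolding rho_def qf_czB[OF i] s by (simp add: sg_add mult_ac)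
qed

lemma inQ_cz: "i < n \<Longrightarrow> inQ n f \<Longrightarrow> inQ n (\<lambda>w. f w * sg (w i * (\<Sum>m<n. c m * w m)))"
proof -
  assume i: "i < n" and "inQ n f"
  then obtain b v B where h: "b \<in> bvecs n" "v \<in> bvecs n" "symB n B" "\<forall>w\<in>bvecs n. f w = rho n b v B w"
    unfolding inQ_def by blast
  have "v(i := v i + c i) \<in> bvecs n" "symB n (czB i c B)" using h i symB_czB by simp_all
  then show ?thesis unfolding inQ_def using h i rho_cz
    by (intro exI[of _ b] exI[of _ "v(i := v i + c i)"] exI[of _ "czB i c B"]) auto
qed



definition gmap :: "bvec \<Rightarrow> nat \<Rightarrow> bvec \<Rightarrow> bvec" where
  "gmap N i w = (\<lambda>j. w j + N j * w i)"

lemma pt_gmap: "ip (b * (x + N * y)) * sg (v * (x + N * y)) =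
   (ip (b * x) * sg (v * x)) * ip (b * N * y) * sg (b * N * x * y) * sg (v * N * y)"
  by (cases b; cases x; cases N; cases y; cases v) (simp_all add: ip_def sg_def)

lemma sg_inv: "sg a * sg a * z = z" by (simp add: sg_sq)

lemma prod_ip_const:
  fixes y :: bit and b N :: bvec and n :: nat
  shows "(\<Prod>k<n. ip (b k * N k * y)) = ip ((\<Sum>k<n. b k * N k) * y) * sg ((\<Sum>k<n. \<Sum>j<k. (b j * N j) * (b k * N k)) * y)"
proof -
  have e1: "(\<Sum>k<n. b k * N k * y) = (\<Sum>k<n. b k * N k) * y" by (simp add: sum_distrib_right)
  have e2: "(\<Sum>k<n. \<Sum>j<k. (b j * N j * y) * (b k * N k * y)) = (\<Sum>k<n. \<Sum>j<k. (b j * N j) * (b k * N k)) * y"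
  proof -
    have "(b j * N j * y) * (b k * N k * y) = (b j * N j) * (b k * N k) * y" for j k
      by (cases y) simp_all
    then show ?thesis by (simp only: sum_distrib_right)
  qed
  have "ip ((\<Sum>k<n. b k * N k) * y) = (\<Prod>k<n. ip (b k * N k * y)) * sg ((\<Sum>k<n. \<Sum>j<k. (b j * N j) * (b k * N k)) * y)"
    using ip_sum[of "\<lambda>k. b k * N k * y" n] unfolding e1 e2 .
  then show ?thesis by (simp add: mult.assoc sg_sq)
qed

lemma qf_gmap:
  assumes B: "symB n B"
  shows "qf n B (gmap N i w) = qf n B w + w i * (\<Sum>m<n. (\<Sum>k<n. B k m * N k) * w m)
     + (\<Sum>j<n. \<Sum>k<j. B k j * N k * N j) * w i"
proof -
  have pt: "B k j * (w k + N k * w i) * (w j + N j * w i) = B k j * w k * w j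
      + w i * (B k j * N k * w j + B j k * N j * w k) + B k j * N k * N j * w i"
    if "k < j" "j < n" for k j
  proof -
    have "B k j = B j k" using B that unfolding symB_def by auto
    then show ?thesis by (cases "w i") (simp_all add: algebra_simps)
  qed
  have "qf n B (gmap N i w) = (\<Sum>j<n. \<Sum>k<j. B k j * w k * w j
      + w i * (B k j * N k * w j + B j k * N j * w k) + B k j * N k * N j * w i)"
    unfolding qf_def gmap_def apply (intro sum.cong refl) apply (rule pt) by auto
  also have "\<dots> = qf n B w + (\<Sum>j<n. \<Sum>k<j. w i * (B k j * N k * w j + B j k * N j * w k))
      + (\<Sum>j<n. \<Sum>k<j. B k j * N k * N j * w i)"
    by (simp only: qf_def sum.distrib)
  also have "\<dots> = qf n B w + w i * (\<Sum>j<n. \<Sum>k<j. B k j * N k * w j + B j k * N j * w k)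
      + (\<Sum>j<n. \<Sum>k<j. B k j * N k * N j) * w i"
    by (simp only: sum_distrib_left sum_distrib_right)
  also have "(\<Sum>j<n. \<Sum>k<j. B k j * N k * w j + B j k * N j * w k) = (\<Sum>m<n. (\<Sum>k<n. B k m * N k) * w m)"
  proof -
    have "(\<Sum>j<n. \<Sum>k<j. B k j * N k * w j + B j k * N j * w k) + (\<Sum>j<n. B j j * N j * w j)
        = (\<Sum>j<n. \<Sum>k<n. B k j * N k * w j)"
      by (rule full_sum[of "\<lambda>k j. B k j * N k * w j"])
    moreover have "(\<Sum>j<n. B j j * N j * w j) = 0" using B unfolding symB_def by simp
    ultimately show ?thesis by (simp add: sum_distrib_right)
  qed
  finally show ?thesis .
qed

lemma rho_gmap:
  assumes B: "symB n B"
  shows "rho n b v B (gmap N i w) = rho n b v B w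
    * ip ((\<Sum>k<n. b k * N k) * w i) * sg ((\<Sum>k<n. \<Sum>j<k. (b j * N j) * (b k * N k)) * w i)
    * sg (w i * (\<Sum>m<n. (b m * N m) * w m)) * sg ((\<Sum>j<n. v j * N j) * w i)
    * sg (w i * (\<Sum>m<n. (\<Sum>k<n. B k m * N k) * w m)) * sg ((\<Sum>j<n. \<Sum>k<j. B k j * N k * N j) * w i)"
proof -
  have P: "(\<Prod>j<n. ip (b j * gmap N i w j) * sg (v j * gmap N i w j))
     = (\<Prod>j<n. ip (b j * w j) * sg (v j * w j)) * (\<Prod>j<n. ip (b j * N j * w i))
       * (\<Prod>j<n. sg (b j * N j * w j * w i)) * (\<Prod>j<n. sg (v j * N j * w i))"
    unfolding gmap_def pt_gmap by (simp add: prod.distrib)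
  have P2: "(\<Prod>j<n. sg (b j * N j * w j * w i)) = sg (w i * (\<Sum>m<n. (b m * N m) * w m))"
    by (simp add: sg_sum sum_distrib_left mult_ac)
  have P3: "(\<Prod>j<n. sg (v j * N j * w i)) = sg ((\<Sum>j<n. v j * N j) * w i)"
    by (simp add: sg_sum sum_distrib_right)
  show ?thesis
    unfolding rho_def P P2 P3 prod_ip_const qf_gmap[OF B] sg_add by (simp add: mult_ac)
qed

lemma gmap_bvecs: "N \<in> bvecs n \<Longrightarrow> w \<in> bvecs n \<Longrightarrow> gmap N i w \<in> bvecs n"
  unfolding gmap_def bvecs_def by auto

lemma gmap_inv: "N i = 0 \<Longrightarrow> gmap N i (gmap N i w) = w"
  unfolding gmap_def by (auto simp: fun_eq_iff algebra_simps)

lemma gmap_i: "N i = 0 \<Longrightarrow> gmap N i w i = w i"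
  unfolding gmap_def by simp

lemma rho_trans:
  assumes i: "i < n" and b: "b \<in> bvecs n" and v: "v \<in> bvecs n" and B: "symB n B"
    and N: "N \<in> bvecs n" "N i = 0"
  shows "\<exists>b' v' B'. b' \<in> bvecs n \<and> v' \<in> bvecs n \<and> symB n B' \<and>
     (\<forall>w\<in>bvecs n. rho n b' v' B' (gmap N i w) = rho n b v B w * ip (w i) * sg (q * w i))"
proof -
  let ?f = "\<lambda>w. rho n b v B (gmap N i w) * ip (w i) * sg (q * w i)"
  have "inQ n (\<lambda>w. rho n b v B w
    * ip (w i * (\<Sum>k<n. b k * N k)) * sg ((\<Sum>k<n. \<Sum>j<k. (b j * N j) * (b k * N k)) * w i)
    * sg (w i * (\<Sum>m<n. (b m * N m) * w m)) * sg ((\<Sum>j<n. v j * N j) * w i)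
    * sg (w i * (\<Sum>m<n. (\<Sum>k<n. B k m * N k) * w m)) * sg ((\<Sum>j<n. \<Sum>k<j. B k j * N k * N j) * w i)
    * ip (w i) * sg (q * w i))"
    by (intro inQ_lin[OF i] inQ_ip[OF i] inQ_cz[OF i] inQ_ipc[OF i] inQ_rho b v B)
  then have "inQ n ?f"
    by (rule inQ_cong) (simp add: rho_gmap[OF B] mult.commute[of "w i" for w])
  then obtain b' v' B' where h: "b' \<in> bvecs n" "v' \<in> bvecs n" "symB n B'"
    "\<forall>w\<in>bvecs n. ?f w = rho n b' v' B' w" unfolding inQ_def by blast
  have "rho n b' v' B' (gmap N i w) = rho n b v B w * ip (w i) * sg (q * w i)" if w: "w \<in> bvecs n" for w
    using h(4) gmap_bvecs[OF N(1) w] gmap_inv[of N i, OF N(2)] gmap_i[of N i, OF N(2)] by metis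
  then show ?thesis using h by blast
qed



definition mprod :: "nat \<Rightarrow> bmat \<Rightarrow> bmat \<Rightarrow> bmat" where
  "mprod n X Y = (\<lambda>i k. \<Sum>j<n. X i j * Y j k)"
definition Im :: bmat where "Im = (\<lambda>i k. if i = k then 1 else 0)"

lemma GL2_alt: "GL2 n A \<longleftrightarrow> (\<exists>A'. (\<forall>i<n. \<forall>k<n. mprod n A A' i k = Im i k) \<and> (\<forall>i<n. \<forall>k<n. mprod n A' A i k = Im i k))"
  unfolding GL2_def mprod_def Im_def ..

lemma mprod_assoc: "mprod n (mprod n X Y) Z i k = mprod n X (mprod n Y Z) i k"
  unfolding mprod_def sum_distrib_left sum_distrib_right by (subst sum.swap) (simp add: mult.assoc)

lemma mprod_cong_right: "(\<And>j k. j < n \<Longrightarrow> k < n \<Longrightarrow> P j k = Q j k) \<Longrightarrow> k < n \<Longrightarrow> mprod n X P i k = mprod n X Q i k"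
  unfolding mprod_def by (intro sum.cong) auto

lemma mprod_cong_left: "(\<And>i j. i < n \<Longrightarrow> j < n \<Longrightarrow> P i j = Q i j) \<Longrightarrow> i < n \<Longrightarrow> mprod n P X i k = mprod n Q X i k"
  unfolding mprod_def by (intro sum.cong) auto

lemma mprod_I_left: "i < n \<Longrightarrow> mprod n Im X i k = X i k"
proof -
  assume i: "i < n"
  have "mprod n Im X i k = (\<Sum>j<n. if i = j then X j k else 0)"
    unfolding mprod_def Im_def by (intro sum.cong) auto
  then show ?thesis using i by simp
qed

lemma inv_prod:
  assumes "i < n" "k < n" "\<forall>i<n. \<forall>k<n. mprod n Y Y' i k = Im i k" "\<forall>i<n. \<forall>k<n. mprod n X X' i k = Im i k"
  shows "mprod n (mprod n X Y) (mprod n Y' X') i k = Im i k"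
proof -
  have "mprod n (mprod n X Y) (mprod n Y' X') i k = mprod n X (mprod n Y (mprod n Y' X')) i k"
    by (rule mprod_assoc)
  also have "\<dots> = mprod n X (mprod n (mprod n Y Y') X') i k"
    using assms(2) by (intro mprod_cong_right) (simp_all add: mprod_assoc)
  also have "\<dots> = mprod n X (mprod n Im X') i k"
    using assms(2,3) by (intro mprod_cong_right mprod_cong_left) auto
  also have "\<dots> = mprod n X X' i k"
    using assms(2) by (intro mprod_cong_right) (simp_all add: mprod_I_left)
  finally show ?thesis using assms by simp
qed

lemma GL2_mprod: "GL2 n X \<Longrightarrow> GL2 n Y \<Longrightarrow> GL2 n (mprod n X Y)"
proof -
  assume "GL2 n X" "GL2 n Y"
  then obtain X' Y' where X: "\<forall>i<n. \<forall>k<n. mprod n X X' i k = Im i k" "\<forall>i<n. \<forall>k<n. mprod n X' X i k = Im i k"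
    and Y: "\<forall>i<n. \<forall>k<n. mprod n Y Y' i k = Im i k" "\<forall>i<n. \<forall>k<n. mprod n Y' Y i k = Im i k"
    unfolding GL2_alt by blast
  show ?thesis unfolding GL2_alt
    by (rule exI[of _ "mprod n Y' X'"]) (auto intro: inv_prod[OF _ _ Y(1) X(1)] inv_prod[OF _ _ X(2) Y(2)])
qed

definition Gm :: "bvec \<Rightarrow> nat \<Rightarrow> bmat" where
  "Gm N c = (\<lambda>j l. Im j l + (if l = c then N j else 0))"

lemma Gm_sq:
  assumes c: "c < n" and N: "N c = 0" and jk: "j < n"
  shows "mprod n (Gm N c) (Gm N c) j k = Im j k"
proof -
  let ?Y = "\<lambda>l. Im l k + (if k = c then N l else 0)"
  have "mprod n (Gm N c) (Gm N c) j k = (\<Sum>l<n. (if l = j then ?Y l else 0) + (if l = c then N j * ?Y l else 0))"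
    unfolding mprod_def Gm_def by (intro sum.cong refl) (auto simp: Im_def algebra_simps)
  also have "\<dots> = ?Y j + N j * ?Y c" using c jk by (simp add: sum.distrib)
  also have "\<dots> = Im j k" using N by (auto simp: Im_def algebra_simps)
  finally show ?thesis .
qed

lemma GL2_Gm: "c < n \<Longrightarrow> N c = 0 \<Longrightarrow> GL2 n (Gm N c)"
  unfolding GL2_alt using Gm_sq by blast

lemma matvec_mprod: "matvec n (mprod n G A) y = matvec n G (matvec n A y)"
proof
  fix j
  have "(\<Sum>l<n. (\<Sum>m<n. G j m * A m l) * y l) = (\<Sum>m<n. G j m * (\<Sum>l<n. A m l * y l))"
    unfolding sum_distrib_left sum_distrib_right by (subst sum.swap) (simp add: mult.assoc)
  also have "\<dots> = (\<Sum>m<n. G j m * (if m < n then \<Sum>l<n. A m l * y l else 0))"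
    by (intro sum.cong) auto
  finally show "matvec n (mprod n G A) y j = matvec n G (matvec n A y) j"
    unfolding matvec_def mprod_def by simp
qed

lemma matvec_Gm:
  assumes "c < n" "N \<in> bvecs n" "w \<in> bvecs n"
  shows "matvec n (Gm N c) w = gmap N c w"
proof
  fix j show "matvec n (Gm N c) w j = gmap N c w j"
  proof (cases "j < n")
    case True
    have "(\<Sum>l<n. Gm N c j l * w l) = (\<Sum>l<n. (if l = j then w l else 0) + (if l = c then N j * w l else 0))"
      unfolding Gm_def by (intro sum.cong refl) (auto simp: Im_def algebra_simps)
    also have "\<dots> = w j + N j * w c" using True assms by (simp add: sum.distrib)
    finally show ?thesis using True unfolding matvec_def gmap_def by simp
  next
    case False then show ?thesis using assms unfolding matvec_def gmap_def bvecs_def by simp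
  qed
qed



lemma r2: "complex_of_real (sqrt 2) * complex_of_real (sqrt 2) = 2"
proof -
  have "complex_of_real (sqrt 2) * complex_of_real (sqrt 2) = complex_of_real (sqrt 2 * sqrt 2)"
    by (simp only: of_real_mult)
  also have "sqrt 2 * sqrt 2 = (2::real)" by simp
  finally show ?thesis by simp
qed

lemma inv_r2: "1 / complex_of_real (sqrt 2) = complex_of_real (sqrt 2) / 2"
  using r2 by (simp add: field_simps)

lemma cis4: "cis (pi/4) = (1 + \<i>) * (complex_of_real (sqrt 2) / 2)"
  by (simp add: complex_eq_iff cos_45 sin_45)

lemma Hg_h: "Hg a b = sg (a * b) * (complex_of_real (sqrt 2) / 2)"
proof -
  have "Hg a b = sg (a * b) * (1 / complex_of_real (sqrt 2))"
    by (cases a; cases b) (simp_all add: Hg_def sg_def)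
  then show ?thesis by (simp only: inv_r2)
qed

definition Kf :: "bit \<Rightarrow> bit \<Rightarrow> complex" where
  "Kf p t = (if p = 1 then cis (pi/4) * ip t * sg t else ip t)"

lemma BI_gen:
  fixes x t l p :: bit and h :: complex
  assumes hh: "h * h = 1/2"
  shows "ip x * (sg (x*0) * h * ip (p*0) * sg (0*l) * (sg (0*t) * h) + sg (x*1) * h * ip (p*1) * sg (1*l) * (sg (1*t) * h))
       = (if p = 1 then (1 + \<i>) * h * ip t * sg t else ip t) * ip l * sg (p*l) * sg (t*l) *
         ((if p = 1 then dl x 0 else sg (x*0) * h) * sg (0*l) * (sg (0*t) * h) + (if p = 1 then dl x 1 else sg (x*1) * h) * sg (1*l) * (sg (1*t) * h))"
proof -
  have h2: "h * (h * z) = z / 2" for z using hh by (metis mult.assoc mult.commute times_divide_eq_right mult_1)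
  show ?thesis
    by (cases x; cases t; cases l; cases p) (simp_all add: dl_def sg_def ip_def algebra_simps h2 hh)
qed

lemma BI:
  fixes x t l p :: bit
  shows "ip x * (Hg x 0 * ip (p*0) * sg (0*l) * Hg 0 t + Hg x 1 * ip (p*1) * sg (1*l) * Hg 1 t)
       = Kf p t * ip l * sg (p*l) * sg (t*l) *
         ((if p = 1 then dl x 0 else Hg x 0) * sg (0*l) * Hg 0 t + (if p = 1 then dl x 1 else Hg x 1) * sg (1*l) * Hg 1 t)"
proof -
  have hh: "(complex_of_real (sqrt 2) / 2) * (complex_of_real (sqrt 2) / 2) = 1/2"
    using r2 by (simp add: field_simps)
  show ?thesis unfolding Hg_h Kf_def cis4 using BI_gen[OF hh, of x p l t] by (simp add: mult.assoc)
qed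

lemma PW: "ip (d * z) * Hg z t * (ip (N * z) * sg (p * N * z) * sg (T * N * z))
     = ip ((d + N) * z) * Hg z (t + N * T + (d + p) * N)"
  by (cases d; cases z; cases t; cases N; cases p; cases T) (simp_all add: Hg_def ip_def sg_def)

lemma sum_split_i:
  assumes i: "i < n"
  shows "(\<Sum>z\<in>bvecs n. f z) = (\<Sum>z\<in>{z\<in>bvecs n. z i = 0}. f z + f (z(i:=1)))"
proof -
  let ?Z0 = "{z\<in>bvecs n. z i = 0}" and ?Z1 = "{z\<in>bvecs n. z i = 1}"
  have U: "bvecs n = ?Z0 \<union> ?Z1" by (auto intro: bit.exhaust)
  have Dj: "?Z0 \<inter> ?Z1 = {}" by auto
  have R: "(\<Sum>z\<in>?Z0. f (z(i:=1))) = (\<Sum>z\<in>?Z1. f z)"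
    by (rule sum.reindex_bij_witness[of _ "\<lambda>z. z(i:=0)" "\<lambda>z. z(i:=1)"]) (use i in auto)
  have "(\<Sum>z\<in>bvecs n. f z) = (\<Sum>z\<in>?Z0. f z) + (\<Sum>z\<in>?Z1. f z)"
    by (subst U, rule sum.union_disjoint) auto
  also have "\<dots> = (\<Sum>z\<in>?Z0. f z + f (z(i:=1)))" by (simp add: sum.distrib R)
  finally show ?thesis .
qed

lemma cis_add4: "cis ((a + b) * pi / 4) = cis (a * pi / 4) * cis (b * pi / 4)"
  by (simp add: cis_mult distrib_right add_divide_distrib)

lemma cis_const:
  "cis (of_int (k + (if p = 1 then 1 else 0) + (if ui = 1 then 2 else 0) + (if p = 1 \<and> ui = 1 then 4 else 0)) * pi / 4)
   = cis (of_int k * pi / 4) * ((if p = 1 then cis (pi/4) else 1) * ip ui * sg (p * ui))"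
proof -
  have c2: "cis (2 * pi / 4) = \<i>"
  proof -
    have "2 * pi / 4 = pi / 2" by simp
    then show ?thesis by simp
  qed
  have c7: "cis (7 * pi / 4) = cis (pi/4) * \<i> * -1"
  proof -
    have "7 * pi / 4 = pi/4 + pi/2 + pi" by simp
    then have "cis (7 * pi / 4) = cis (pi/4) * cis (pi/2) * cis pi" by (simp only: cis_mult)
    then show ?thesis by simp
  qed
  show ?thesis
  proof (cases p; cases ui)
    assume "p = 0" "ui = 0" then show ?thesis by simp
  next
    assume "p = 0" "ui = 1" then show ?thesis using cis_add4[of "of_int k" 2] c2 by simp
  next
    assume "p = 1" "ui = 0" then show ?thesis using cis_add4[of "of_int k" 1] by simp
  next
    assume "p = 1" "ui = 1" then show ?thesis using cis_add4[of "of_int k" 7] c7 by (simp add: add.commute)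
  qed
qed



lemma HAf_upd: "i < n \<Longrightarrow> HAf n a x (z(i:=c)) = (if a i = 1 then Hg (x i) c else dl (x i) c) *
   (\<Prod>m\<in>{..<n}-{i}. if a m = 1 then Hg (x m) (z m) else dl (x m) (z m))"
  unfolding HAf_def using prod_upd_split[of i n "\<lambda>m v. if a m = 1 then Hg (x m) v else dl (x m) v" z c] by simp

lemma ipv_upd: "i < n \<Longrightarrow> ipv n d (z(i:=c)) = ip (d i * c) * (\<Prod>m\<in>{..<n}-{i}. ip (d m * z m))"
  unfolding ipv_def using prod_upd_split[of i n "\<lambda>m v. ip (d m * v)" z c] by simp

lemma Hallf_upd: "i < n \<Longrightarrow> Hallf n (z(i:=c)) t = Hg c (t i) * (\<Prod>m\<in>{..<n}-{i}. Hg (z m) (t m))"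
  unfolding Hallf_def using prod_upd_split[of i n "\<lambda>m v. Hg v (t m)" z c] by simp

lemma perz:
  fixes x :: bvec
  assumes i: "i < n" and z: "z \<in> bvecs n" "z i = 0" and ai: "a i = 1" and D: "symB n D"
    and N: "N \<in> bvecs n" "N i = 0" "\<And>m. m < n \<Longrightarrow> D i m = N m"
    and p: "p = d i"
    and a': "a' = (if p = 1 then a(i:=0) else a)"
    and d': "d' = (\<lambda>j. if j = i then 0 else d j + N j)"
    and D': "D' = (\<lambda>j k. D j k + (if j = k then 0 else N j * N k))"
    and t': "t' = (\<lambda>j. t j + N j * t i + (d j + p) * N j)"
  defines "F \<equiv> \<lambda>z. HAf n a x z * ipv n d z * sg (qf n D z) * Hallf n z t"
    and "F' \<equiv> \<lambda>z. HAf n a' x z * ipv n d' z * sg (qf n D' z) * Hallf n z t'"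
  shows "ip (x i) * (F z + F (z(i:=1))) = Kf p (t i) * (F' z + F' (z(i:=1)))"
proof -
  define R where "R = {..<n}-{i}"
  define HR where "HR = (\<Prod>m\<in>R. if a m = 1 then Hg (x m) (z m) else dl (x m) (z m))"
  define IR where "IR = (\<Prod>m\<in>R. ip (d m * z m))"
  define IR' where "IR' = (\<Prod>m\<in>R. ip (d' m * z m))"
  define HLR where "HLR = (\<Prod>m\<in>R. Hg (z m) (t m))"
  define HLR' where "HLR' = (\<Prod>m\<in>R. Hg (z m) (t' m))"
  define l where "l = (\<Sum>m<n. D i m * z m)"
  define S where "S = sg (qf n D z)"
  define S' where "S' = sg (qf n D' z)"
  have symD': "symB n D'" using D unfolding symB_def D' by (auto simp: mult.commute)
  have D'i: "D' i m = D i m" for m using N(2) unfolding D' by simp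
  have l': "(\<Sum>m<n. D' i m * z m) = l" unfolding l_def D'i ..
  have t'i: "t' i = t i" unfolding t' using N(2) by simp
  have z0: "z(i:=0) = z" using z(2) by auto
  have FA: "F (z(i:=c)) = Hg (x i) c * HR * (ip (p * c) * IR) * (S * sg (c * l)) * (Hg c (t i) * HLR)" for c
    unfolding F_def HAf_upd[OF i] ipv_upd[OF i] qf_upd[of n D i z c, OF D i z(2)] Hallf_upd[OF i] sg_add
    using ai p by (simp add: HR_def IR_def HLR_def R_def S_def l_def)
  have HR': "(\<Prod>m\<in>{..<n}-{i}. if a' m = 1 then Hg (x m) (z m) else dl (x m) (z m)) = HR"
    unfolding HR_def R_def a' by (intro prod.cong) auto
  have FA': "F' (z(i:=c)) = (if p = 1 then dl (x i) c else Hg (x i) c) * HR * IR' * (S' * sg (c * l)) * (Hg c (t i) * HLR')" for c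
    unfolding F'_def HAf_upd[OF i] ipv_upd[OF i] qf_upd[of n D' i z c, OF symD' i z(2)] Hallf_upd[OF i] sg_add l' t'i HR'
    using ai by (simp add: a' d' IR'_def HLR'_def R_def S'_def)
  have PI: "IR * S * HLR * (ip l * sg (p * l) * sg (t i * l)) = IR' * S' * HLR'"
  proof -
    define PP where "PP = (\<Sum>m<n. \<Sum>j<m. (N j * z j) * (N m * z m))"
    have qfD': "qf n D' z = qf n D z + PP"
    proof -
      have "qf n D' z = (\<Sum>m<n. \<Sum>j<m. D j m * z j * z m + (N j * z j) * (N m * z m))"
        unfolding qf_def D' by (intro sum.cong refl) (auto simp: algebra_simps)
      then show ?thesis unfolding PP_def qf_def by (simp only: sum.distrib)
    qed
    have lN: "l = (\<Sum>m<n. N m * z m)" unfolding l_def using N(3) by simp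
    have ipl: "ip l = (\<Prod>m<n. ip (N m * z m)) * sg PP"
      unfolding lN PP_def by (rule ip_sum)
    have sgpl: "sg (p * l) = (\<Prod>m<n. sg (p * N m * z m))"
      unfolding lN sum_distrib_left by (simp add: sg_sum mult.assoc)
    have sgtl: "sg (t i * l) = (\<Prod>m<n. sg (t i * N m * z m))"
      unfolding lN sum_distrib_left by (simp add: sg_sum mult.assoc)
    have X: "(\<Prod>m<n. ip (N m * z m)) * (\<Prod>m<n. sg (p * N m * z m)) * (\<Prod>m<n. sg (t i * N m * z m))
       = (\<Prod>m\<in>R. ip (N m * z m) * sg (p * N m * z m) * sg (t i * N m * z m))"
      unfolding prod.distrib[symmetric] R_def using prod_remove_at[OF i, of "\<lambda>m. ip (N m * z m) * sg (p * N m * z m) * sg (t i * N m * z m)"] N(2)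
      by simp
    have Y: "IR * HLR * (\<Prod>m\<in>R. ip (N m * z m) * sg (p * N m * z m) * sg (t i * N m * z m)) = IR' * HLR'"
    proof -
      have "IR * HLR * (\<Prod>m\<in>R. ip (N m * z m) * sg (p * N m * z m) * sg (t i * N m * z m))
          = (\<Prod>m\<in>R. ip (d m * z m) * Hg (z m) (t m) * (ip (N m * z m) * sg (p * N m * z m) * sg (t i * N m * z m)))"
        unfolding IR_def HLR_def prod.distrib by simp
      also have "\<dots> = (\<Prod>m\<in>R. ip (d' m * z m) * Hg (z m) (t' m))"
        unfolding R_def d' t' by (intro prod.cong refl) (simp add: PW)
      also have "\<dots> = IR' * HLR'" unfolding IR'_def HLR'_def prod.distrib ..
      finally show ?thesis .
    qed
    have "IR * S * HLR * (ip l * sg (p * l) * sg (t i * l))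
       = (IR * HLR * ((\<Prod>m<n. ip (N m * z m)) * (\<Prod>m<n. sg (p * N m * z m)) * (\<Prod>m<n. sg (t i * N m * z m)))) * (S * sg PP)"
      unfolding ipl sgpl sgtl by (simp add: mult_ac)
    also have "\<dots> = IR' * HLR' * S'" unfolding X Y S'_def S_def qfD' sg_add ..
    finally show ?thesis by (simp add: mult_ac)
  qed
  have "ip (x i) * (F z + F (z(i:=1))) = ip (x i) * (F (z(i:=0)) + F (z(i:=1)))" using z0 by simp
  also have "\<dots> = (HR * IR * S * HLR) * (ip (x i) * (Hg (x i) 0 * ip (p*0) * sg (0*l) * Hg 0 (t i) + Hg (x i) 1 * ip (p*1) * sg (1*l) * Hg 1 (t i)))"
    unfolding FA by (simp add: algebra_simps)
  also have "\<dots> = (HR * IR * S * HLR) * (Kf p (t i) * ip l * sg (p*l) * sg (t i*l) *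
         ((if p = 1 then dl (x i) 0 else Hg (x i) 0) * sg (0*l) * Hg 0 (t i) + (if p = 1 then dl (x i) 1 else Hg (x i) 1) * sg (1*l) * Hg 1 (t i)))"
    by (simp only: BI)
  also have "\<dots> = HR * (IR * S * HLR * (ip l * sg (p * l) * sg (t i * l))) * Kf p (t i) *
         ((if p = 1 then dl (x i) 0 else Hg (x i) 0) * sg (0*l) * Hg 0 (t i) + (if p = 1 then dl (x i) 1 else Hg (x i) 1) * sg (1*l) * Hg 1 (t i))"
    by (simp only: mult_ac)
  also have "\<dots> = HR * (IR' * S' * HLR') * Kf p (t i) *
         ((if p = 1 then dl (x i) 0 else Hg (x i) 0) * sg (0*l) * Hg 0 (t i) + (if p = 1 then dl (x i) 1 else Hg (x i) 1) * sg (1*l) * Hg 1 (t i))"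
    by (simp only: PI)
  also have "\<dots> = Kf p (t i) * (F' (z(i:=0)) + F' (z(i:=1)))"
    unfolding FA' by (simp add: algebra_simps)
  also have "\<dots> = Kf p (t i) * (F' z + F' (z(i:=1)))" using z0 by simp
  finally show ?thesis .
qed



lemma Kconst: "(if p = 1 then cis (pi/4) else 1) * ip ui * sg (p * ui) * (ip wi * sg ((ui + p) * wi))
   = Kf p (wi + ui)"
  by (cases p; cases ui; cases wi) (simp_all add: Kf_def ip_def sg_def mult.assoc)

lemma caseCD:
  assumes i: "i < n" and a: "a \<in> bvecs n" and d: "d \<in> bvecs n" and u: "u \<in> bvecs n"
    and v: "v \<in> bvecs n" and b: "b \<in> bvecs n" and D: "symB n D" and B: "symB n B" and A: "GL2 n A"
    and ai: "a i = 1"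
  shows "\<exists>a' d' D' k' u' v' b' B' A'. a' \<in> bvecs n \<and> d' \<in> bvecs n \<and> u' \<in> bvecs n \<and> v' \<in> bvecs n \<and>
     b' \<in> bvecs n \<and> symB n D' \<and> symB n B' \<and> GL2 n A' \<and>
     (\<forall>x\<in>bvecs n. \<forall>y\<in>bvecs n. NFf n a' d' D' k' u' v' b' B' A' x y = ip (x i) * NFf n a d D k u v b B A x y)"
proof -
  define p where "p = d i"
  define N where "N = (\<lambda>j. if j < n then D i j else 0)"
  have N1: "N \<in> bvecs n" unfolding N_def bvecs_def by auto
  have N2: "N i = 0" using D i unfolding N_def symB_def by auto
  have N3: "D i m = N m" if "m < n" for m using that unfolding N_def by simp
  define a' where "a' = (if p = 1 then a(i:=0) else a)"
  define d' where "d' = (\<lambda>j. if j = i then 0 else d j + N j)"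
  define D' where "D' = (\<lambda>j k. D j k + (if j = k then 0 else N j * N k))"
  define u' where "u' = (\<lambda>j. u j + N j * u i + (d j + p) * N j)"
  define A' where "A' = mprod n (Gm N i) A"
  obtain b' v' B' where bvB: "b' \<in> bvecs n" "v' \<in> bvecs n" "symB n B'"
    and rhoeq: "\<forall>w\<in>bvecs n. rho n b' v' B' (gmap N i w) = rho n b v B w * ip (w i) * sg ((u i + p) * w i)"
    using rho_trans[OF i b v B N1 N2, of "u i + p"] by blast
  define k' where "k' = k + (if p = 1 then 1 else 0) + (if u i = 1 then 2 else 0) + (if p = 1 \<and> u i = 1 then 4 else 0)"
  have a'b: "a' \<in> bvecs n" unfolding a'_def using a i by simp
  have d'b: "d' \<in> bvecs n" using d N1 unfolding d'_def bvecs_def by auto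
  have u'b: "u' \<in> bvecs n" using u N1 unfolding u'_def bvecs_def by auto
  have D'b: "symB n D'" using D unfolding symB_def D'_def by (auto simp: mult.commute)
  have A'b: "GL2 n A'" unfolding A'_def by (rule GL2_mprod[OF GL2_Gm[of i n N, OF i N2] A])
  have main: "NFf n a' d' D' k' u' v' b' B' A' x y = ip (x i) * NFf n a d D k u v b B A x y"
    if x: "x \<in> bvecs n" and y: "y \<in> bvecs n" for x y
  proof -
    define w where "w = matvec n A y"
    have w: "w \<in> bvecs n" unfolding w_def by simp
    have w': "matvec n A' y = gmap N i w"
      unfolding A'_def matvec_mprod w_def[symmetric] by (rule matvec_Gm[OF i N1 w])
    define t where "t = vadd w u"
    define t' where "t' = (\<lambda>j. t j + N j * t i + (d j + p) * N j)"
    have tt: "vadd (gmap N i w) u' = t'"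
      unfolding t'_def t_def vadd_def gmap_def u'_def by (rule ext) (simp add: algebra_simps)
    define F where "F = (\<lambda>z. HAf n a x z * ipv n d z * sg (qf n D z) * Hallf n z t)"
    define F' where "F' = (\<lambda>z. HAf n a' x z * ipv n d' z * sg (qf n D' z) * Hallf n z t')"
    have const: "cis (of_int k' * pi / 4) * rho n b' v' B' (gmap N i w) = cis (of_int k * pi / 4) * rho n b v B w * Kf p (t i)"
    proof -
      have "cis (of_int k' * pi / 4) * rho n b' v' B' (gmap N i w)
          = cis (of_int k * pi / 4) * ((if p = 1 then cis (pi/4) else 1) * ip (u i) * sg (p * u i)) * (rho n b v B w * ip (w i) * sg ((u i + p) * w i))"
        unfolding k'_def cis_const using rhoeq w by simp
      also have "\<dots> = cis (of_int k * pi / 4) * rho n b v B w * ((if p = 1 then cis (pi/4) else 1) * ip (u i) * sg (p * u i) * (ip (w i) * sg ((u i + p) * w i)))"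
        by (simp only: mult_ac)
      also have "\<dots> = cis (of_int k * pi / 4) * rho n b v B w * Kf p (t i)"
        unfolding Kconst t_def vadd_def ..
      finally show ?thesis .
    qed
    have sums: "ip (x i) * (\<Sum>z\<in>bvecs n. F z) = Kf p (t i) * (\<Sum>z\<in>bvecs n. F' z)"
    proof -
      have "ip (x i) * (\<Sum>z\<in>bvecs n. F z) = (\<Sum>z\<in>{z\<in>bvecs n. z i = 0}. ip (x i) * (F z + F (z(i:=1))))"
        unfolding sum_split_i[OF i, of F] sum_distrib_left ..
      also have "\<dots> = (\<Sum>z\<in>{z\<in>bvecs n. z i = 0}. Kf p (t i) * (F' z + F' (z(i:=1))))"
      proof (intro sum.cong refl)
        fix z assume "z \<in> {z\<in>bvecs n. z i = 0}"
        then have z: "z \<in> bvecs n" "z i = 0" by auto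
        show "ip (x i) * (F z + F (z(i:=1))) = Kf p (t i) * (F' z + F' (z(i:=1)))"
          unfolding F_def F'_def
          by (rule perz[OF i z ai D N1 N2 N3 p_def a'_def d'_def D'_def t'_def])
      qed
      also have "\<dots> = Kf p (t i) * (\<Sum>z\<in>bvecs n. F' z)"
        unfolding sum_split_i[OF i, of F'] sum_distrib_left ..
      finally show ?thesis .
    qed
    have "NFf n a' d' D' k' u' v' b' B' A' x y = cis (of_int k' * pi / 4) * rho n b' v' B' (gmap N i w) * (\<Sum>z\<in>bvecs n. F' z)"
      unfolding NFf_def w' tt F'_def ..
    also have "\<dots> = cis (of_int k * pi / 4) * rho n b v B w * (Kf p (t i) * (\<Sum>z\<in>bvecs n. F' z))"
      unfolding const by (simp only: mult_ac)
    also have "\<dots> = cis (of_int k * pi / 4) * rho n b v B w * (ip (x i) * (\<Sum>z\<in>bvecs n. F z))"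
      unfolding sums ..
    also have "\<dots> = ip (x i) * NFf n a d D k u v b B A x y"
      unfolding NFf_def w_def[symmetric] t_def[symmetric] F_def by (simp only: mult_ac)
    finally show ?thesis .
  qed
  show ?thesis
    apply (rule exI[of _ a'], rule exI[of _ d'], rule exI[of _ D'], rule exI[of _ k'], rule exI[of _ u'],
           rule exI[of _ v'], rule exI[of _ b'], rule exI[of _ B'], rule exI[of _ A'])
    apply (intro conjI ballI)
    using a'b d'b u'b bvB D'b A'b main by simp_all
qed



lemma HAf_swap:
  assumes i: "i < n" and ai: "a i = 0"
  shows "HAf n a x z * f (z i) = HAf n a x z * f (x i)"
proof -
  have "HAf n a x z = dl (x i) (z i) * (\<Prod>m\<in>{..<n}-{i}. if a m = 1 then Hg (x m) (z m) else dl (x m) (z m))"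
    unfolding HAf_def by (subst prod_remove_at[OF i]) (simp add: ai)
  then show ?thesis by (cases "x i = z i") (simp_all add: dl_def)
qed

lemma ip_sq: "ip c * ip c = sg c" by (cases c) (simp_all add: ip_def sg_def)

lemma caseA:
  assumes i: "i < n" and d: "d \<in> bvecs n" and ai: "a i = 0" and di: "d i = 0"
  shows "NFf n a (d(i:=1)) D k u v b B A x y = ip (x i) * NFf n a d D k u v b B A x y"
proof -
  have ipv: "ipv n (d(i:=1)) z = ipv n d z * ip (z i)" for z
    unfolding ipv_def by (rule prod_upd_factor[OF i]) (auto simp: di)
  have "(\<Sum>z\<in>bvecs n. HAf n a x z * ipv n (d(i:=1)) z * sg (qf n D z) * Hallf n z (vadd (matvec n A y) u))
      = ip (x i) * (\<Sum>z\<in>bvecs n. HAf n a x z * ipv n d z * sg (qf n D z) * Hallf n z (vadd (matvec n A y) u))"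
    unfolding sum_distrib_left
  proof (intro sum.cong refl)
    fix z
    have "HAf n a x z * ipv n (d(i:=1)) z * sg (qf n D z) * Hallf n z (vadd (matvec n A y) u)
        = (HAf n a x z * ip (z i)) * (ipv n d z * sg (qf n D z) * Hallf n z (vadd (matvec n A y) u))"
      unfolding ipv by (simp only: mult_ac)
    also have "\<dots> = (HAf n a x z * ip (x i)) * (ipv n d z * sg (qf n D z) * Hallf n z (vadd (matvec n A y) u))"
      unfolding HAf_swap[of i n a x z ip, OF i ai] ..
    finally show "HAf n a x z * ipv n (d(i:=1)) z * sg (qf n D z) * Hallf n z (vadd (matvec n A y) u)
        = ip (x i) * (HAf n a x z * ipv n d z * sg (qf n D z) * Hallf n z (vadd (matvec n A y) u))"
      by (simp only: mult_ac)
  qed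
  then show ?thesis unfolding NFf_def by (simp only: mult_ac)
qed

lemma caseB:
  assumes i: "i < n" and d: "d \<in> bvecs n" and ai: "a i = 0" and di: "d i = 1"
  shows "NFf n a (d(i:=0)) D k (u(i := u i + 1)) v b B A x y = ip (x i) * NFf n a d D k u v b B A x y"
proof -
  have ipv: "ipv n d z = ipv n (d(i:=0)) z * ip (z i)" for z
    unfolding ipv_def by (rule prod_upd_factor[OF i]) (auto simp: di)
  have hall: "Hallf n z (vadd w (u(i := u i + 1))) = Hallf n z (vadd w u) * sg (z i)" for z w
    unfolding Hallf_def vadd_def
  proof (rule prod_upd_factor[OF i])
    show "Hg (z i) (w i + (u(i := u i + 1)) i) = Hg (z i) (w i + u i) * sg (z i)"
      by (cases "z i"; cases "w i"; cases "u i") (simp_all add: Hg_def sg_def)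
  qed auto
  have key: "HAf n a x z * sg (z i) = ip (x i) * (HAf n a x z * ip (z i))" for z
  proof -
    have "HAf n a x z * sg (z i) = HAf n a x z * sg (x i)" by (rule HAf_swap[of i n a x z sg, OF i ai])
    moreover have "HAf n a x z * ip (z i) = HAf n a x z * ip (x i)" by (rule HAf_swap[of i n a x z ip, OF i ai])
    ultimately show ?thesis by (simp add: ip_sq[symmetric] mult_ac)
  qed
  have "(\<Sum>z\<in>bvecs n. HAf n a x z * ipv n (d(i:=0)) z * sg (qf n D z) * Hallf n z (vadd (matvec n A y) (u(i := u i + 1))))
      = ip (x i) * (\<Sum>z\<in>bvecs n. HAf n a x z * ipv n d z * sg (qf n D z) * Hallf n z (vadd (matvec n A y) u))"
    unfolding sum_distrib_left
  proof (intro sum.cong refl)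
    fix z
    have "HAf n a x z * ipv n (d(i:=0)) z * sg (qf n D z) * Hallf n z (vadd (matvec n A y) (u(i := u i + 1)))
        = (HAf n a x z * sg (z i)) * (ipv n (d(i:=0)) z * sg (qf n D z) * Hallf n z (vadd (matvec n A y) u))"
      unfolding hall by (simp only: mult_ac)
    also have "\<dots> = ip (x i) * (HAf n a x z * ip (z i)) * (ipv n (d(i:=0)) z * sg (qf n D z) * Hallf n z (vadd (matvec n A y) u))"
      unfolding key ..
    also have "\<dots> = ip (x i) * (HAf n a x z * ipv n d z * sg (qf n D z) * Hallf n z (vadd (matvec n A y) u))"
      unfolding ipv by (simp only: mult_ac)
    finally show "HAf n a x z * ipv n (d(i:=0)) z * sg (qf n D z) * Hallf n z (vadd (matvec n A y) (u(i := u i + 1)))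
        = ip (x i) * (HAf n a x z * ipv n d z * sg (qf n D z) * Hallf n z (vadd (matvec n A y) u))" .
  qed
  then show ?thesis unfolding NFf_def by (simp only: mult_ac)
qed

lemma key:
  assumes i: "i < n" and a: "a \<in> bvecs n" and d: "d \<in> bvecs n" and u: "u \<in> bvecs n"
    and v: "v \<in> bvecs n" and b: "b \<in> bvecs n" and D: "symB n D" and B: "symB n B" and A: "GL2 n A"
  shows "\<exists>a' d' D' k' u' v' b' B' A'. a' \<in> bvecs n \<and> d' \<in> bvecs n \<and> u' \<in> bvecs n \<and> v' \<in> bvecs n \<and>
     b' \<in> bvecs n \<and> symB n D' \<and> symB n B' \<and> GL2 n A' \<and>
     (\<forall>x\<in>bvecs n. \<forall>y\<in>bvecs n. NFf n a' d' D' k' u' v' b' B' A' x y = ip (x i) * NFf n a d D k u v b B A x y)"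
proof (cases "a i")
  case one then show ?thesis using caseCD[OF assms] by blast
next
  case zero
  show ?thesis
  proof (cases "d i")
    case zero': zero
    have "d(i:=1) \<in> bvecs n" using d i by simp
    moreover have "\<forall>x\<in>bvecs n. \<forall>y\<in>bvecs n. NFf n a (d(i:=1)) D k u v b B A x y = ip (x i) * NFf n a d D k u v b B A x y"
      using caseA[where i=i and n=n and d=d and a=a, OF i d zero zero'] by blast
    ultimately show ?thesis using a u v b D B A by blast
  next
    case one
    have "d(i:=0) \<in> bvecs n" "u(i := u i + 1) \<in> bvecs n" using d u i by simp_all
    moreover have "\<forall>x\<in>bvecs n. \<forall>y\<in>bvecs n. NFf n a (d(i:=0)) D k (u(i := u i + 1)) v b B A x y = ip (x i) * NFf n a d D k u v b B A x y"
      using caseB[where i=i and n=n and d=d and a=a, OF i d zero one] by blast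
    ultimately show ?thesis using a v b D B A by blast
  qed
qed

theorem lemma4p2:
  fixes n i :: nat and C :: qop
  assumes "in_normal_form n C" and "i < n"
  shows "in_normal_form n (mmult n (gate1 i Pg) C)"
proof -
  obtain a d D k u v b B A where h: "a \<in> bvecs n" "d \<in> bvecs n" "u \<in> bvecs n" "v \<in> bvecs n" "b \<in> bvecs n"
     "symB n D" "symB n B" "GL2 n A" "op_eq n C (normal_form_op n a d D k u v b B A)"
    using assms(1) unfolding in_normal_form_def by blast
  obtain a' d' D' k' u' v' b' B' A' where h': "a' \<in> bvecs n" "d' \<in> bvecs n" "u' \<in> bvecs n" "v' \<in> bvecs n"
     "b' \<in> bvecs n" "symB n D'" "symB n B'" "GL2 n A'"
     "\<forall>x\<in>bvecs n. \<forall>y\<in>bvecs n. NFf n a' d' D' k' u' v' b' B' A' x y = ip (x i) * NFf n a d D k u v b B A x y"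
    using key[where k=k, OF assms(2) h(1-8)] by blast
  have "op_eq n (mmult n (gate1 i Pg) C) (normal_form_op n a' d' D' k' u' v' b' B' A')"
    unfolding op_eq_def
  proof (intro ballI)
    fix x y assume x: "x \<in> bvecs n" and y: "y \<in> bvecs n"
    have "mmult n (gate1 i Pg) C x y = ip (x i) * C x y"
      by (rule mmult_diag_left[OF _ x]) (simp add: gate1_P)
    also have "C x y = NFf n a d D k u v b B A x y"
      using h(9) x y NF_entry[OF x y h(3)] unfolding op_eq_def by simp
    also have "ip (x i) * NFf n a d D k u v b B A x y = normal_form_op n a' d' D' k' u' v' b' B' A' x y"
      using h'(9) x y NF_entry[OF x y h'(3)] by simp
    finally show "mmult n (gate1 i Pg) C x y = normal_form_op n a' d' D' k' u' v' b' B' A' x y" .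
  qed
  then show ?thesis unfolding in_normal_form_def using h' by blast
qed

end
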